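(* Let $T$ be a DAT with duration vector $d$, let $v$ be a module of $T$, and let $T^v$, $\tilde v$, $d^v$ be as defined below. Then for every successful attack $\mathcal{O}$ on $T$ there exists a successful attack $\mathcal{O}'$ on $T^v$ with $\mathrm{t}(\mathcal{O}',d^v)\le\mathrm{t}(\mathcal{O},d)$.
   Context: A dynamic attack tree (DAT) is a finite rooted directed acyclic graph $T=(N,E)$ (edges point from a node to its children) with root $\mathrm{R}_T$, in which each node $v$ has a type $\gamma(v)\in\{\mathtt{BAS},\mathtt{OR},\mathtt{AND},\mathtt{SAND}\}$, with $\gamma(v)=\mathtt{BAS}$ if and only if $v$ is a leaf. Every node of type $\mathtt{SAND}$ comes with a fixed linear ordering $v_1,\dots,v_n$ of its children, written $v=\mathtt{SAND}(v_1,\dots,v_n)$; similarly one writes $v=\mathtt{OR}(v_1,\dots,v_n)$, $v=\mathtt{AND}(v_1,\dots,v_n)$. $N_\gamma$ denotes the set of nodes of type $\gamma$. For a node $v$, $T_v$ is the sub-DAG induced on the descendants of $v$ (all nodes reachable from $v$ by a directed path, including $v$), rooted at $v$, with the inherited types and orderings, and $B_v$ is the set of nodes of $T_v$ of type $\mathtt{BAS}$. A module of $T$ is a node $v\in N\setminus N_{\mathtt{BAS}}$ such that every directed path from a node outside $T_v$ to a node of $T_v$ passes through $v$; equivalently, every node of $T_v$ other than $v$ has all its parents inside $T_v$. An attack on $T$ is a pair $\mathcal{O}=(A,\prec)$ where $A\subseteq N_{\mathtt{BAS}}$ and $\prec$ is a strict partial order on $A$. An attack $(A,\prec)$ reaches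 a node $v$, defined recursively: if $v\in N_{\mathtt{BAS}}$, iff $v\in A$; if $v=\mathtt{OR}(v_1,\dots,v_n)$, iff it reaches some $v_i$; if $v=\mathtt{AND}(v_1,\dots,v_n)$, iff it reaches all $v_i$; if $v=\mathtt{SAND}(v_1,\dots,v_n)$, iff it reaches all $v_i$ and for every $i<n$, every $a\in A\cap B_{v_i}$ and every $a'\in A\cap B_{v_{i+1}}$ one has $a\prec a'$. An attack is successful if it reaches the root. A duration vector is $d\in\mathbb{R}_{\ge0}^{N_{\mathtt{BAS}}}$. For an attack $\mathcal{O}=(A,\prec)$, $\mathrm{t}(\mathcal{O},d)=\max_C\sum_{a\in C}d_a$, the maximum over all maximal chains $C$ of $(A,\prec)$ (equal to $0$ if $A=\varnothing$). The min time $\mathrm{mt}(T,d)$ is the minimum of $\mathrm{t}(\mathcal{O},d)$ over successful attacks $\mathcal{O}$ on $T$ ($\infty$ if there are none). For a module $v$: $T^v$ is the DAT obtained from $T$ by deleting all nodes of $T_v$ other than $v$ (with their incident edges) and turning $v$ into a new leaf $\tilde v$ of type $\mathtt{BAS}$ (keeping its incoming edges and its position in the child orderings of its $\mathtt{SAND}$-parents); $d^v$ is the duration vector on the BASes of $T^v$ given by $d^v_a=d_a$ for $a\in N_{\mathtt{BAS}}\setminus B_v$ and $d^v_{\tilde v}=\mathrm{mt}(T_v,d|_{B_v})$ (if this is $\infty$, then $\mathrm{t}(\mathcal{O},d^v)=\infty$ for any attack $\mathcal{O}$ containing $\tilde v$). *)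

theory Defs
  imports Complex_Main "HOL-Library.Extended_Real"
begin

datatype ntype = BAS | OR | AND | SAND

record 'n dat =
  nodes :: "'n set"
  rt :: 'n
  ntyp :: "'n \<Rightarrow> ntype"
  children :: "'n \<Rightarrow> 'n list"

definition edges :: "'n dat \<Rightarrow> ('n \<times> 'n) set" where
  "edges T = {(u, c). u \<in> nodes T \<and> c \<in> set (children T u)}"

definition is_DAT :: "'n dat \<Rightarrow> bool" where
  "is_DAT T \<longleftrightarrow>
     finite (nodes T) \<and> rt T \<in> nodes T \<and>
     (\<forall>u \<in> nodes T. set (children T u) \<subseteq> nodes T \<and> distinct (children T u)) \<and>
     (\<forall>u. (u, u) \<notin> (edges T)\<^sup>+) \<and>
     (\<forall>u \<in> nodes T. (rt T, u) \<in> (edges T)\<^sup>*) \<and>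
     (\<forall>u \<in> nodes T. ntyp T u = BAS \<longleftrightarrow> children T u = [])"

definition basnodes :: "'n dat \<Rightarrow> 'n set" where
  "basnodes T = {u \<in> nodes T. ntyp T u = BAS}"

definition desc :: "'n dat \<Rightarrow> 'n \<Rightarrow> 'n set" where
  "desc T v = {w. (v, w) \<in> (edges T)\<^sup>*}"

definition Bset :: "'n dat \<Rightarrow> 'n \<Rightarrow> 'n set" where
  "Bset T v = desc T v \<inter> basnodes T"

definition subdat :: "'n dat \<Rightarrow> 'n \<Rightarrow> 'n dat" where
  "subdat T v = \<lparr>nodes = desc T v, rt = v, ntyp = ntyp T, children = children T\<rparr>"

definition is_module :: "'n dat \<Rightarrow> 'n \<Rightarrow> bool" where
  "is_module T v \<longleftrightarrow> v \<in> nodes T \<and> ntyp T v \<noteq> BAS \<and>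
     (\<forall>u \<in> desc T v - {v}. \<forall>p \<in> nodes T. u \<in> set (children T p) \<longrightarrow> p \<in> desc T v)"

text \<open>T^v: delete all proper descendants of v and make v itself a leaf of type BAS
  (the new leaf \<open>\<tilde>v\<close> is represented by the node v itself).\<close>
definition contract :: "'n dat \<Rightarrow> 'n \<Rightarrow> 'n dat" where
  "contract T v = \<lparr>nodes = nodes T - (desc T v - {v}), rt = rt T,
                    ntyp = (ntyp T)(v := BAS), children = (children T)(v := [])\<rparr>"

definition is_attack :: "'n dat \<Rightarrow> 'n set \<Rightarrow> ('n \<times> 'n) set \<Rightarrow> bool" where
  "is_attack T A P \<longleftrightarrow> A \<subseteq> basnodes T \<and> P \<subseteq> A \<times> A \<and>
     (\<forall>a. (a, a) \<notin> P) \<and> trans P"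

inductive reaches :: "'n dat \<Rightarrow> 'n set \<Rightarrow> ('n \<times> 'n) set \<Rightarrow> 'n \<Rightarrow> bool"
  for T A P where
  r_bas: "v \<in> nodes T \<Longrightarrow> ntyp T v = BAS \<Longrightarrow> v \<in> A \<Longrightarrow> reaches T A P v"
| r_or: "v \<in> nodes T \<Longrightarrow> ntyp T v = OR \<Longrightarrow> c \<in> set (children T v) \<Longrightarrow>
          reaches T A P c \<Longrightarrow> reaches T A P v"
| r_and: "v \<in> nodes T \<Longrightarrow> ntyp T v = AND \<Longrightarrow>
          (\<forall>c. c \<in> set (children T v) \<longrightarrow> reaches T A P c) \<Longrightarrow> reaches T A P v"
| r_sand: "v \<in> nodes T \<Longrightarrow> ntyp T v = SAND \<Longrightarrow>
          (\<forall>c. c \<in> set (children T v) \<longrightarrow> reaches T A P c) \<Longrightarrow>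
          (\<forall>i. Suc i < length (children T v) \<longrightarrow>
              (\<forall>a \<in> A \<inter> Bset T (children T v ! i).
                 \<forall>a' \<in> A \<inter> Bset T (children T v ! Suc i). (a, a') \<in> P)) \<Longrightarrow>
          reaches T A P v"

definition successful :: "'n dat \<Rightarrow> 'n set \<Rightarrow> ('n \<times> 'n) set \<Rightarrow> bool" where
  "successful T A P \<longleftrightarrow> reaches T A P (rt T)"

definition is_chain :: "'n set \<Rightarrow> ('n \<times> 'n) set \<Rightarrow> 'n set \<Rightarrow> bool" where
  "is_chain A P C \<longleftrightarrow> C \<subseteq> A \<and> (\<forall>x \<in> C. \<forall>y \<in> C. x \<noteq> y \<longrightarrow> (x, y) \<in> P \<or> (y, x) \<in> P)"

definition maximal_chain :: "'n set \<Rightarrow> ('n \<times> 'n) set \<Rightarrow> 'n set \<Rightarrow> bool" where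
  "maximal_chain A P C \<longleftrightarrow> is_chain A P C \<and> (\<forall>C'. is_chain A P C' \<and> C \<subseteq> C' \<longrightarrow> C' = C)"

text \<open>Attack time t(O,d): maximum over maximal chains of the summed durations
  (durations are extended reals, to allow the value \<infinity> for the contracted node).\<close>
definition attack_time :: "'n set \<Rightarrow> ('n \<times> 'n) set \<Rightarrow> ('n \<Rightarrow> ereal) \<Rightarrow> ereal" where
  "attack_time A P d = Sup {sum d C | C. maximal_chain A P C}"

text \<open>Min time mt(T,d); Inf of the empty set is \<infinity>.\<close>
definition min_time :: "'n dat \<Rightarrow> ('n \<Rightarrow> ereal) \<Rightarrow> ereal" where
  "min_time T d = Inf {attack_time A P d | A P. is_attack T A P \<and> successful T A P}"

definition contract_dur :: "'n dat \<Rightarrow> 'n \<Rightarrow> ('n \<Rightarrow> real) \<Rightarrow> 'n \<Rightarrow> ereal" where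
  "contract_dur T v d = (\<lambda>a. if a = v
       then min_time (subdat T v) (\<lambda>b. if b \<in> Bset T v then ereal (d b) else 0)
       else ereal (d a))"

end

theory Submission
  imports Defs
begin

lemma DAT_children: "is_DAT T \<Longrightarrow> u \<in> nodes T \<Longrightarrow> set (children T u) \<subseteq> nodes T"
  unfolding is_DAT_def by (elim conjE) simp

lemma DAT_bas: "is_DAT T \<Longrightarrow> u \<in> nodes T \<Longrightarrow> ntyp T u = BAS \<longleftrightarrow> children T u = []"
  unfolding is_DAT_def by (elim conjE) simp

lemma DAT_acyc: "is_DAT T \<Longrightarrow> (u, u) \<notin> (edges T)\<^sup>+"
  unfolding is_DAT_def by (elim conjE) simp

lemma DAT_root: "is_DAT T \<Longrightarrow> u \<in> nodes T \<Longrightarrow> (rt T, u) \<in> (edges T)\<^sup>*"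
  unfolding is_DAT_def by (elim conjE) simp

lemma DAT_fin: "is_DAT T \<Longrightarrow> finite (nodes T)"
  unfolding is_DAT_def by (elim conjE) simp

lemma DAT_rt: "is_DAT T \<Longrightarrow> rt T \<in> nodes T"
  unfolding is_DAT_def by (elim conjE) simp

lemma edges_nodes: "is_DAT T \<Longrightarrow> (u,c) \<in> edges T \<Longrightarrow> u \<in> nodes T \<and> c \<in> nodes T"
proof -
  assume a: "is_DAT T" "(u,c) \<in> edges T"
  then have "u \<in> nodes T" "c \<in> set (children T u)" unfolding edges_def by auto
  then show ?thesis using DAT_children[OF a(1)] by auto
qed

lemma edge_child: "u \<in> nodes T \<Longrightarrow> c \<in> set (children T u) \<Longrightarrow> (u,c) \<in> edges T"
  by (simp add: edges_def)

lemma desc_nodes: assumes "is_DAT T" "v \<in> nodes T" shows "desc T v \<subseteq> nodes T"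
proof
  fix w assume "w \<in> desc T v"
  then have "(v,w) \<in> (edges T)\<^sup>*" by (simp add: desc_def)
  then show "w \<in> nodes T"
  proof (induction rule: rtrancl_induct)
    case base then show ?case using assms(2) .
  next
    case (step y z) then show ?case using edges_nodes[OF assms(1)] by simp
  qed
qed

lemma desc_self: "v \<in> desc T v" by (simp add: desc_def)

lemma desc_child: assumes "u \<in> nodes T" "c \<in> set (children T u)" shows "desc T c \<subseteq> desc T u"
proof
  fix w assume w: "w \<in> desc T c"
  have "(u,c) \<in> edges T" using assms by (simp add: edges_def)
  moreover have "(c,w) \<in> (edges T)\<^sup>*" using w by (simp add: desc_def)
  ultimately have "(u,w) \<in> (edges T)\<^sup>*" by (rule converse_rtrancl_into_rtrancl)
  then show "w \<in> desc T u" by (simp add: desc_def)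
qed

lemma desc_trans: assumes "w \<in> desc T u" shows "desc T w \<subseteq> desc T u"
proof
  fix x assume "x \<in> desc T w"
  then have "(w,x) \<in> (edges T)\<^sup>*" by (simp add: desc_def)
  moreover have "(u,w) \<in> (edges T)\<^sup>*" using assms by (simp add: desc_def)
  ultimately show "x \<in> desc T u" by (simp add: desc_def)
qed

lemma child_desc: "u \<in> nodes T \<Longrightarrow> c \<in> set (children T u) \<Longrightarrow> u \<in> desc T v \<Longrightarrow> c \<in> desc T v"
  using desc_child[of u T c] desc_trans[of u T v] desc_self[of c T] by (meson subsetD)

lemma Bset_trans: "w \<in> desc T u \<Longrightarrow> Bset T w \<subseteq> Bset T u"
  unfolding Bset_def using desc_trans[of w T u] by auto

lemma reach_ne:
  assumes "is_DAT T"
  shows "reaches T A P u \<Longrightarrow> \<exists>a\<in>A. a \<in> desc T u \<and> a \<in> basnodes T"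
proof (induction rule: reaches.induct)
  case (r_bas v)
  then show ?case by (auto simp: desc_def basnodes_def)
next
  case (r_or v c)
  then show ?case using desc_child[of v T c] by (meson subsetD)
next
  case (r_and v)
  then have "children T v \<noteq> []" using DAT_bas[OF assms, of v] by simp
  then have h: "hd (children T v) \<in> set (children T v)" by simp
  then obtain a where "a \<in> A" "a \<in> desc T (hd (children T v))" "a \<in> basnodes T"
    using r_and.IH by blast
  then show ?case using r_and h desc_child[of v T "hd (children T v)"] by (meson subsetD)
next
  case (r_sand v)
  then have "children T v \<noteq> []" using DAT_bas[OF assms, of v] by simp
  then have h: "hd (children T v) \<in> set (children T v)" by simp
  then obtain a where "a \<in> A" "a \<in> desc T (hd (children T v))" "a \<in> basnodes T"
    using r_sand.IH by blast
  then show ?case using r_sand h desc_child[of v T "hd (children T v)"] by (meson subsetD)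
qed

lemma subdat_simps[simp]: "nodes (subdat T v) = desc T v" "ntyp (subdat T v) = ntyp T"
  "children (subdat T v) = children T" "rt (subdat T v) = v"
  by (simp_all add: subdat_def)

lemma subdat_Bset: assumes "is_DAT T" "v \<in> nodes T"
  shows "Bset (subdat T v) c \<subseteq> desc T c"
proof -
  have es: "edges (subdat T v) \<subseteq> edges T"
  proof
    fix e assume "e \<in> edges (subdat T v)"
    then obtain x y where e: "e = (x,y)" "x \<in> desc T v" "y \<in> set (children T x)"
      unfolding edges_def by auto
    then have "x \<in> nodes T" using desc_nodes[OF assms] by auto
    then show "e \<in> edges T" using e by (simp add: edges_def)
  qed
  have "desc (subdat T v) c \<subseteq> desc T c"
    unfolding desc_def using rtrancl_mono[OF es] by auto
  then show ?thesis unfolding Bset_def by auto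
qed

lemma sub_reach:
  assumes "is_DAT T" "v \<in> nodes T"
  shows "reaches T A P u \<Longrightarrow> u \<in> desc T v \<Longrightarrow>
     reaches (subdat T v) (A \<inter> Bset T v) (P \<inter> ((A \<inter> Bset T v) \<times> (A \<inter> Bset T v))) u"
proof (induction rule: reaches.induct)
  case (r_bas u)
  show ?case by (rule reaches.r_bas) (use r_bas in \<open>auto simp: Bset_def basnodes_def\<close>)
next
  case (r_or u c)
  then have cd: "c \<in> desc T v" using child_desc by metis
  show ?case by (rule reaches.r_or[of _ _ c]) (use r_or cd in auto)
next
  case (r_and u)
  have cd: "\<forall>c. c \<in> set (children T u) \<longrightarrow> c \<in> desc T v" using r_and child_desc by metis
  show ?case by (rule reaches.r_and) (use r_and cd in auto)
next
  case (r_sand u)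
  have ch: "\<forall>c. c \<in> set (children T u) \<longrightarrow> c \<in> desc T v" using r_sand child_desc by metis
  show ?case
  proof (rule reaches.r_sand)
    show "\<forall>i. Suc i < length (children (subdat T v) u) \<longrightarrow>
      (\<forall>a\<in>A \<inter> Bset T v \<inter> Bset (subdat T v) (children (subdat T v) u ! i).
          \<forall>a'\<in>A \<inter> Bset T v \<inter> Bset (subdat T v) (children (subdat T v) u ! Suc i).
             (a, a') \<in> P \<inter> (A \<inter> Bset T v) \<times> (A \<inter> Bset T v))"
    proof (intro allI impI ballI)
      fix i a a'
      assume i: "Suc i < length (children (subdat T v) u)"
        and a: "a \<in> A \<inter> Bset T v \<inter> Bset (subdat T v) (children (subdat T v) u ! i)"
        and a': "a' \<in> A \<inter> Bset T v \<inter> Bset (subdat T v) (children (subdat T v) u ! Suc i)"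
      have "a \<in> A \<inter> Bset T (children T u ! i)"
        using a subdat_Bset[OF assms(1,2), of "children T u ! i"] unfolding Bset_def by auto
      moreover have "a' \<in> A \<inter> Bset T (children T u ! Suc i)"
        using a' subdat_Bset[OF assms(1,2), of "children T u ! Suc i"] unfolding Bset_def by auto
      moreover have "Suc i < length (children T u)" using i by simp
      ultimately have "(a,a') \<in> P" using r_sand.hyps(3) by blast
      then show "(a, a') \<in> P \<inter> (A \<inter> Bset T v) \<times> (A \<inter> Bset T v)" using a a' by auto
    qed
  qed (use r_sand ch in auto)
qed

definition A'c :: "'n dat \<Rightarrow> 'n \<Rightarrow> 'n set \<Rightarrow> ('n \<times> 'n) set \<Rightarrow> 'n set" where
  "A'c T v A P = (A - Bset T v) \<union> {x. x = v \<and> reaches T A P v}"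

definition P'c :: "'n dat \<Rightarrow> 'n \<Rightarrow> 'n set \<Rightarrow> ('n \<times> 'n) set \<Rightarrow> ('n \<times> 'n) set" where
  "P'c T v A P = (P \<inter> ((A - Bset T v) \<times> (A - Bset T v)))
    \<union> {(a,x). a \<in> A - Bset T v \<and> x = v \<and> reaches T A P v \<and> (\<forall>b\<in>A \<inter> Bset T v. (a,b)\<in>P)}
    \<union> {(x,a). a \<in> A - Bset T v \<and> x = v \<and> reaches T A P v \<and> (\<forall>b\<in>A \<inter> Bset T v. (b,a)\<in>P)}"

lemma contract_simps[simp]: "nodes (contract T v) = nodes T - (desc T v - {v})"
  "ntyp (contract T v) = (ntyp T)(v := BAS)" "children (contract T v) = (children T)(v := [])"
  "rt (contract T v) = rt T"
  by (simp_all add: contract_def)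

lemma contract_child:
  assumes "is_DAT T" "is_module T v" "u \<in> nodes (contract T v)" "u \<noteq> v" "c \<in> set (children T u)"
  shows "c \<in> nodes (contract T v)"
proof -
  have u: "u \<in> nodes T" "u \<notin> desc T v - {v}" using assms(3) by auto
  have cn: "c \<in> nodes T" using DAT_children[OF assms(1) u(1)] assms(5) by auto
  show ?thesis
  proof (rule ccontr)
    assume "c \<notin> nodes (contract T v)"
    then have "c \<in> desc T v - {v}" using cn by auto
    then have "u \<in> desc T v" using assms(2) u(1) assms(5) unfolding is_module_def by blast
    then show False using u assms(4) by auto
  qed
qed

lemma contract_Bset: assumes "is_DAT T"
  shows "Bset (contract T v) c \<subseteq> desc T c"
proof -
  have es: "edges (contract T v) \<subseteq> edges T"
  proof
    fix e assume "e \<in> edges (contract T v)"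
    then obtain x y where e: "e = (x,y)" "x \<in> nodes T" "y \<in> set (((children T)(v := [])) x)"
      unfolding edges_def by auto
    then have "y \<in> set (children T x)" by (cases "x = v") auto
    then show "e \<in> edges T" using e by (simp add: edges_def)
  qed
  have "desc (contract T v) c \<subseteq> desc T c"
    unfolding desc_def using rtrancl_mono[OF es] by auto
  then show ?thesis unfolding Bset_def by auto
qed

lemma rt_contract: assumes "is_DAT T" "v \<in> nodes T" shows "rt T \<in> nodes (contract T v)"
proof (rule ccontr)
  assume "rt T \<notin> nodes (contract T v)"
  then have "rt T \<in> desc T v" "rt T \<noteq> v" using DAT_rt[OF assms(1)] by auto
  then have "(v, rt T) \<in> (edges T)\<^sup>+" unfolding desc_def by (simp add: rtrancl_eq_or_trancl)
  moreover have "(rt T, v) \<in> (edges T)\<^sup>*" using DAT_root[OF assms] .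
  ultimately have "(v, v) \<in> (edges T)\<^sup>+" by (rule trancl_rtrancl_trancl)
  then show False using DAT_acyc[OF assms(1)] by blast
qed

lemma contract_attack:
  assumes "is_DAT T" "is_module T v" "is_attack T A P"
  shows "is_attack (contract T v) (A'c T v A P) (P'c T v A P)"
proof -
  let ?R = "reaches T A P v"
  let ?Av = "A \<inter> Bset T v"
  let ?A0 = "A - Bset T v"
  have vn: "v \<in> nodes T" "ntyp T v \<noteq> BAS" using assms(2) unfolding is_module_def by auto
  have Ab: "A \<subseteq> basnodes T" and PA: "P \<subseteq> A \<times> A" and irr: "\<forall>a. (a,a) \<notin> P" and tr: "trans P"
    using assms(3) unfolding is_attack_def by auto
  have vA: "v \<notin> A" using Ab vn by (auto simp: basnodes_def)
  have ne: "?R \<Longrightarrow> ?Av \<noteq> {}" using reach_ne[OF assms(1), of A P v] unfolding Bset_def by blast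
  have "A'c T v A P \<subseteq> basnodes (contract T v)"
  proof
    fix x assume x: "x \<in> A'c T v A P"
    show "x \<in> basnodes (contract T v)"
    proof (cases "x = v")
      case True then show ?thesis using vn by (simp add: basnodes_def desc_self)
    next
      case False
      then have "x \<in> A" "x \<notin> Bset T v" using x by (auto simp: A'c_def)
      then have "x \<in> basnodes T" "x \<notin> desc T v" using Ab by (auto simp: Bset_def)
      then show ?thesis using False by (simp add: basnodes_def)
    qed
  qed
  moreover have "P'c T v A P \<subseteq> A'c T v A P \<times> A'c T v A P"
    unfolding P'c_def A'c_def by auto
  moreover have "\<forall>a. (a,a) \<notin> P'c T v A P"
    using irr vA vA unfolding P'c_def by auto
  moreover have "trans (P'c T v A P)"
  proof (rule transI)
    fix x y z assume xy: "(x,y) \<in> P'c T v A P" and yz: "(y,z) \<in> P'c T v A P"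
    show "(x,z) \<in> P'c T v A P"
    proof (cases "x = v")
      case xv: True
      then have y: "y \<in> ?A0" "?R" "\<forall>b\<in>?Av. (b,y)\<in>P" using xy vA vA unfolding P'c_def by auto
      then have yv: "y \<noteq> v" using vA by auto
      show ?thesis
      proof (cases "z = v")
        case True
        then have "\<forall>b\<in>?Av. (y,b)\<in>P" using yz yv vA unfolding P'c_def by auto
        obtain b where "b \<in> ?Av" using ne y(2) by blast
        then have "(b,b) \<in> P" using y \<open>\<forall>b\<in>?Av. (y,b)\<in>P\<close> tr by (meson transD)
        then show ?thesis using irr by blast
      next
        case False
        then have "(y,z) \<in> P" "z \<in> ?A0" using yz yv vA unfolding P'c_def by auto
        then have "\<forall>b\<in>?Av. (b,z)\<in>P" using y tr by (meson transD)
        then show ?thesis using xv y \<open>z \<in> ?A0\<close> vA unfolding P'c_def by auto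
      qed
    next
      case xnv: False
      show ?thesis
      proof (cases "y = v")
        case yv: True
        then have x: "x \<in> ?A0" "?R" "\<forall>b\<in>?Av. (x,b)\<in>P" using xy xnv vA unfolding P'c_def by auto
        have z: "z \<in> ?A0" "\<forall>b\<in>?Av. (b,z)\<in>P" using yz yv vA vA unfolding P'c_def by auto
        obtain b where "b \<in> ?Av" using ne x(2) by blast
        then have "(x,z) \<in> P" using x z tr by (meson transD)
        moreover have "x \<noteq> z" using irr \<open>(x,z) \<in> P\<close> by auto
        ultimately show ?thesis using x z vA unfolding P'c_def by auto
      next
        case ynv: False
        then have x: "(x,y) \<in> P" "x \<in> ?A0" "y \<in> ?A0" using xy xnv vA unfolding P'c_def by auto
        show ?thesis
        proof (cases "z = v")
          case True
          then have "\<forall>b\<in>?Av. (y,b)\<in>P" "?R" using yz ynv vA unfolding P'c_def by auto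
          then have "\<forall>b\<in>?Av. (x,b)\<in>P" using x tr by (meson transD)
          then show ?thesis using True x \<open>?R\<close> vA unfolding P'c_def by auto
        next
          case False
          then have "(y,z) \<in> P" "z \<in> ?A0" using yz ynv vA unfolding P'c_def by auto
          then have "(x,z) \<in> P" using x tr by (meson transD)
          then show ?thesis using x \<open>z \<in> ?A0\<close> vA unfolding P'c_def by auto
        qed
      qed
    qed
  qed
  ultimately show ?thesis unfolding is_attack_def by blast
qed

lemma contract_reach:
  assumes DAT: "is_DAT T" and mo: "is_module T v" and att: "is_attack T A P"
  shows "reaches T A P u \<Longrightarrow> u \<in> nodes (contract T v) \<Longrightarrow>
    reaches (contract T v) (A'c T v A P) (P'c T v A P) u"
proof (induction rule: reaches.induct)
  let ?R = "reaches T A P v"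
  let ?Av = "A \<inter> Bset T v"
  let ?A0 = "A - Bset T v"
  let ?C = "contract T v"
  have vn: "v \<in> nodes T" "ntyp T v \<noteq> BAS" using mo unfolding is_module_def by auto
  have Ab: "A \<subseteq> basnodes T" and irr: "\<forall>a. (a,a) \<notin> P"
    using att unfolding is_attack_def by auto
  have vA: "v \<notin> A" using Ab vn by (auto simp: basnodes_def)
  have ne: "?R \<Longrightarrow> ?Av \<noteq> {}" using reach_ne[OF DAT, of A P v] unfolding Bset_def by blast
  have vcase: "reaches ?C (A'c T v A P) (P'c T v A P) v" if "?R"
    by (rule reaches.r_bas) (use that vn in \<open>auto simp: A'c_def desc_self\<close>)
  have chn: "c \<in> nodes ?C" if "u \<in> nodes ?C" "u \<noteq> v" "c \<in> set (children T u)" for u c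
    using contract_child[OF DAT mo that] .
  {
    case (r_bas u)
    then have "u \<noteq> v" using vn by auto
    then show ?case by (rule_tac reaches.r_bas) (use r_bas in \<open>auto simp: A'c_def Bset_def\<close>)
  next
    case (r_or u c)
    show ?case
    proof (cases "u = v")
      case True
      have "reaches T A P u" by (rule reaches.r_or[where c=c]) (use r_or in auto)
      then show ?thesis using vcase True by simp
    next
      case False
      have "c \<in> nodes ?C" using chn r_or False by blast
      then have "reaches ?C (A'c T v A P) (P'c T v A P) c" using r_or by blast
      then show ?thesis by (rule_tac reaches.r_or[where c=c]) (use r_or False in auto)
    qed
  next
    case (r_and u)
    show ?case
    proof (cases "u = v")
      case True
      have "reaches T A P u" by (rule reaches.r_and) (use r_and in auto)
      then show ?thesis using vcase True by simp
    next
      case False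
      have "\<forall>c. c \<in> set (children T u) \<longrightarrow> reaches ?C (A'c T v A P) (P'c T v A P) c"
        using chn r_and False by blast
      then show ?thesis by (rule_tac reaches.r_and) (use r_and False in auto)
    qed
  next
    case (r_sand u)
    show ?case
    proof (cases "u = v")
      case True
      have "reaches T A P u" by (rule reaches.r_sand) (use r_sand in auto)
      then show ?thesis using vcase True by simp
    next
      case False
      have chr: "\<forall>c. c \<in> set (children T u) \<longrightarrow> reaches ?C (A'c T v A P) (P'c T v A P) c"
        using chn r_sand False by blast
      have inA: "x \<in> ?A0 \<and> x \<in> A \<inter> Bset T c" if "x \<in> A'c T v A P \<inter> Bset ?C c" "x \<noteq> v" for x c
      proof -
        have "x \<in> ?A0" using that by (auto simp: A'c_def)
        moreover have "x \<in> desc T c" using that contract_Bset[OF DAT, of v c] by blast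
        ultimately show ?thesis using Ab by (auto simp: Bset_def)
      qed
      have inV: "?R \<and> ?Av \<subseteq> A \<inter> Bset T c" if "v \<in> A'c T v A P \<inter> Bset ?C c" for c
      proof -
        have "?R" using that vA by (auto simp: A'c_def)
        moreover have "v \<in> desc T c" using that contract_Bset[OF DAT, of v c] by blast
        ultimately show ?thesis using Bset_trans[of v T c] by blast
      qed
      have ord: "(a, a') \<in> P'c T v A P"
        if i: "Suc i < length (children T u)"
        and a: "a \<in> A'c T v A P \<inter> Bset ?C (children T u ! i)"
        and a': "a' \<in> A'c T v A P \<inter> Bset ?C (children T u ! Suc i)" for i a a'
      proof -
        have H: "\<forall>x\<in>A \<inter> Bset T (children T u ! i). \<forall>y\<in>A \<inter> Bset T (children T u ! Suc i). (x, y) \<in> P"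
          using r_sand.hyps(3) i by blast
        show ?thesis
        proof (cases "a = v")
          case av: True
          show ?thesis
          proof (cases "a' = v")
            case True
            obtain b where b: "b \<in> ?Av" using ne inV[OF a[unfolded av]] by blast
            then have "(b,b) \<in> P" using H inV[OF a[unfolded av]] inV[OF a'[unfolded True]] by blast
            then show ?thesis using irr by blast
          next
            case False
            have a'A: "a' \<in> ?A0" "a' \<in> A \<inter> Bset T (children T u ! Suc i)" using inA[OF a' False] by auto
            have "\<forall>b\<in>?Av. (b,a') \<in> P" using H a'A inV[OF a[unfolded av]] by blast
            then show ?thesis using av a'A inV[OF a[unfolded av]] unfolding P'c_def by auto
          qed
        next
          case anv: False
          have aA: "a \<in> ?A0" "a \<in> A \<inter> Bset T (children T u ! i)" using inA[OF a anv] by auto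
          show ?thesis
          proof (cases "a' = v")
            case True
            have "\<forall>b\<in>?Av. (a,b) \<in> P" using H aA inV[OF a'[unfolded True]] by blast
            then show ?thesis using True aA inV[OF a'[unfolded True]] unfolding P'c_def by auto
          next
            case False
            have a'A: "a' \<in> ?A0" "a' \<in> A \<inter> Bset T (children T u ! Suc i)" using inA[OF a' False] by auto
            have "(a,a') \<in> P" using H aA a'A by blast
            then show ?thesis using aA a'A unfolding P'c_def by auto
          qed
        qed
      qed
      show ?thesis
      proof (rule reaches.r_sand)
        show "\<forall>i. Suc i < length (children ?C u) \<longrightarrow>
          (\<forall>a\<in>A'c T v A P \<inter> Bset ?C (children ?C u ! i).
            \<forall>a'\<in>A'c T v A P \<inter> Bset ?C (children ?C u ! Suc i). (a, a') \<in> P'c T v A P)"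
          using ord False by simp
      qed (use r_sand False chr in auto)
    qed
  }
qed

lemma chain_ext: assumes "finite A"
  shows "is_chain A P C \<Longrightarrow> \<exists>C2. maximal_chain A P C2 \<and> C \<subseteq> C2"
proof (induction "card (A - C)" arbitrary: C rule: less_induct)
  case less
  show ?case
  proof (cases "maximal_chain A P C")
    case True thus ?thesis by blast
  next
    case False
    then obtain C' where C': "is_chain A P C'" "C \<subseteq> C'" "C' \<noteq> C"
      using less.prems unfolding maximal_chain_def by blast
    have "C' \<subseteq> A" using C'(1) unfolding is_chain_def by blast
    then have "A - C' \<subset> A - C" using C' by blast
    then have "card (A - C') < card (A - C)" using assms by (meson finite_Diff psubset_card_mono)
    from less.hyps[OF this C'(1)] obtain C2 where "maximal_chain A P C2" "C' \<subseteq> C2" by blast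
    then show ?thesis using C'(2) by blast
  qed
qed

lemma at_le:
  assumes "\<And>C'. maximal_chain A' P' C' \<Longrightarrow> \<exists>C. maximal_chain A P C \<and> sum f C' \<le> sum g C"
  shows "attack_time A' P' f \<le> attack_time A P g"
  unfolding attack_time_def
proof (rule Sup_least)
  fix x assume "x \<in> {sum f C |C. maximal_chain A' P' C}"
  then obtain C' where C': "x = sum f C'" "maximal_chain A' P' C'" by blast
  then obtain C where C: "maximal_chain A P C" "sum f C' \<le> sum g C" using assms by blast
  show "x \<le> Sup {sum g C |C. maximal_chain A P C}"
    by (rule Sup_upper2[of "sum g C"]) (use C C' in auto)
qed

lemma sup_attained:
  fixes f :: "'n \<Rightarrow> ereal"
  assumes "finite A"
  shows "\<exists>C. maximal_chain A P C \<and> attack_time A P f = sum f C"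
proof -
  let ?S = "{sum f C |C. maximal_chain A P C}"
  have "?S \<subseteq> sum f ` Pow A" unfolding maximal_chain_def is_chain_def by auto
  then have fin: "finite ?S" using assms by (meson finite_Pow_iff finite_imageI finite_subset)
  have "is_chain A P {}" unfolding is_chain_def by auto
  then obtain C0 where "maximal_chain A P C0" using chain_ext[OF assms] by blast
  then have ne: "?S \<noteq> {}" by blast
  have "Sup ?S = Max ?S" using cSup_eq_Max[OF fin ne] .
  then have "Sup ?S \<in> ?S" using Max_in[OF fin ne] by simp
  then show ?thesis unfolding attack_time_def by auto
qed

theorem mainTheorem11:
  fixes T :: "'n dat" and d :: "'n \<Rightarrow> real" and v :: 'n
    and A :: "'n set" and P :: "('n \<times> 'n) set"
  assumes "is_DAT T"
    and "\<forall>a \<in> basnodes T. d a \<ge> 0"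
    and "is_module T v"
    and "is_attack T A P" and "successful T A P"
  shows "\<exists>A' P'. is_attack (contract T v) A' P' \<and> successful (contract T v) A' P' \<and>
           attack_time A' P' (contract_dur T v d) \<le> attack_time A P (\<lambda>a. ereal (d a))"
proof (intro exI conjI)
  note DAT = assms(1) and mo = assms(3) and att = assms(4)
  let ?A' = "A'c T v A P" and ?P' = "P'c T v A P"
  let ?R = "reaches T A P v"
  let ?Av = "A \<inter> Bset T v"
  let ?Pv = "P \<inter> (?Av \<times> ?Av)"
  let ?A0 = "A - Bset T v"
  let ?dv = "\<lambda>b. if b \<in> Bset T v then ereal (d b) else 0"
  let ?e = "\<lambda>a. ereal (d a)"
  have vn: "v \<in> nodes T" "ntyp T v \<noteq> BAS" using mo unfolding is_module_def by auto
  have Ab: "A \<subseteq> basnodes T" and PA: "P \<subseteq> A \<times> A" and irr: "\<forall>a. (a,a) \<notin> P" and tr: "trans P"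
    using att unfolding is_attack_def by auto
  have vA: "v \<notin> A" using Ab vn by (auto simp: basnodes_def)
  have "A \<subseteq> nodes T" using Ab unfolding basnodes_def by auto
  then have finA: "finite A" using DAT_fin[OF DAT] finite_subset by blast
  have nn: "\<And>a. a \<in> A \<Longrightarrow> 0 \<le> ?e a" using Ab assms(2) by auto
  show "is_attack (contract T v) ?A' ?P'" by (rule contract_attack[OF DAT mo att])
  show "successful (contract T v) ?A' ?P'"
    using contract_reach[OF DAT mo att] assms(5) rt_contract[OF DAT vn(1)]
    unfolding successful_def by simp
  have extend: "\<exists>C2. maximal_chain A P C2 \<and> sum ?e C \<le> sum ?e C2" if ch: "is_chain A P C" for C
  proof -
    obtain C2 where C2: "maximal_chain A P C2" "C \<subseteq> C2" using chain_ext[OF finA ch] by blast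
    have "C2 \<subseteq> A" using C2(1) unfolding maximal_chain_def is_chain_def by blast
    then have fC2: "finite C2" using finA finite_subset by blast
    have "sum ?e C \<le> sum ?e C2"
      by (rule sum_mono2[OF fC2 C2(2)]) (use nn \<open>C2 \<subseteq> A\<close> in blast)
    then show ?thesis using C2 by blast
  qed
  show "attack_time ?A' ?P' (contract_dur T v d) \<le> attack_time A P ?e"
  proof (rule at_le)
    fix C' assume mc: "maximal_chain ?A' ?P' C'"
    then have C'ch: "C' \<subseteq> ?A'" "\<forall>x\<in>C'. \<forall>y\<in>C'. x \<noteq> y \<longrightarrow> (x, y) \<in> ?P' \<or> (y, x) \<in> ?P'"
      unfolding maximal_chain_def is_chain_def by auto
    have C'A: "C' - {v} \<subseteq> ?A0" using C'ch(1) by (auto simp: A'c_def)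
    have C0ch: "is_chain A P (C' - {v})"
      unfolding is_chain_def
    proof (intro conjI ballI impI)
      show "C' - {v} \<subseteq> A" using C'A by blast
      fix x y assume "x \<in> C' - {v}" "y \<in> C' - {v}" "x \<noteq> y"
      then show "(x, y) \<in> P \<or> (y, x) \<in> P" using C'ch(2) unfolding P'c_def by fastforce
    qed
    show "\<exists>C. maximal_chain A P C \<and> sum (contract_dur T v d) C' \<le> sum ?e C"
    proof (cases "v \<in> C'")
      case False
      then have "sum (contract_dur T v d) C' = sum ?e C'"
        by (intro sum.cong) (auto simp: contract_dur_def)
      moreover have "is_chain A P C'" using C0ch False by simp
      ultimately show ?thesis using extend by fastforce
    next
      case True
      have R: ?R using True C'ch(1) vA by (auto simp: A'c_def)
      have "C' \<subseteq> insert v A" using C'ch(1) by (auto simp: A'c_def)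
      then have finC': "finite C'" using finA finite_subset by blast
      have finAv: "finite ?Av" using finA by blast
      have sat: "is_attack (subdat T v) ?Av ?Pv"
        unfolding is_attack_def
      proof (intro conjI)
        show "?Av \<subseteq> basnodes (subdat T v)" unfolding Bset_def basnodes_def by auto
        show "?Pv \<subseteq> ?Av \<times> ?Av" by blast
        show "\<forall>a. (a, a) \<notin> ?Pv" using irr by blast
        show "trans ?Pv" using tr unfolding trans_def by blast
      qed
      have ssu: "successful (subdat T v) ?Av ?Pv"
        unfolding successful_def using sub_reach[OF DAT vn(1) R desc_self] by simp
      have "min_time (subdat T v) ?dv \<le> attack_time ?Av ?Pv ?dv"
        unfolding min_time_def by (rule Inf_lower) (use sat ssu in blast)
      moreover obtain Cv where Cv: "maximal_chain ?Av ?Pv Cv" "attack_time ?Av ?Pv ?dv = sum ?dv Cv"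
        using sup_attained[OF finAv] by blast
      moreover have CvAv: "Cv \<subseteq> ?Av" using Cv(1) unfolding maximal_chain_def is_chain_def by blast
      moreover have "sum ?dv Cv = sum ?e Cv" using CvAv by (intro sum.cong) auto
      ultimately have mt: "contract_dur T v d v \<le> sum ?e Cv" by (simp add: contract_dur_def)
      have Cvch: "\<forall>x\<in>Cv. \<forall>y\<in>Cv. x \<noteq> y \<longrightarrow> (x, y) \<in> P \<or> (y, x) \<in> P"
        using Cv(1) unfolding maximal_chain_def is_chain_def by blast
      have cross: "(x, y) \<in> P \<or> (y, x) \<in> P" if "x \<in> C' - {v}" "y \<in> Cv" for x y
      proof -
        have "(x, v) \<in> ?P' \<or> (v, x) \<in> ?P'" using C'ch(2) that True by blast
        then show ?thesis using that CvAv vA unfolding P'c_def by auto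
      qed
      let ?C = "(C' - {v}) \<union> Cv"
      have Cch: "is_chain A P ?C" unfolding is_chain_def
      proof (intro conjI ballI impI)
        show "?C \<subseteq> A" using C'A CvAv by blast
        fix x y assume "x \<in> ?C" "y \<in> ?C" "x \<noteq> y"
        then show "(x, y) \<in> P \<or> (y, x) \<in> P"
          using C0ch Cvch cross unfolding is_chain_def by blast
      qed
      have disj: "(C' - {v}) \<inter> Cv = {}" using C'A CvAv by blast
      have finCv: "finite Cv" using CvAv finAv finite_subset by blast
      have "sum (contract_dur T v d) C' = contract_dur T v d v + sum (contract_dur T v d) (C' - {v})"
        using True finC' by (simp add: sum.remove)
      also have "sum (contract_dur T v d) (C' - {v}) = sum ?e (C' - {v})"
        by (intro sum.cong) (auto simp: contract_dur_def)
      also have "contract_dur T v d v + sum ?e (C' - {v}) \<le> sum ?e Cv + sum ?e (C' - {v})"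
        using mt by (rule add_right_mono)
      also have "\<dots> = sum ?e ?C" using disj finCv finC' by (simp add: sum.union_disjoint add.commute)
      finally have "sum (contract_dur T v d) C' \<le> sum ?e ?C" .
      then show ?thesis using extend[OF Cch] by (meson order_trans)
    qed
  qed
qed

end
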